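(* Let $a\ge0$ be real, let $A:=\frac{a+i}{a-i}$, and suppose $A$ is not a root of unity and $\liminf_{m\to\infty}|A^m-1|^{1/m}=0$. Let $0<R<\infty$. Then there exists $f\in A(B_R)$ such that the unique formal power series solution $u$ of the Goursat problem $\Delta u=f$, $y(x-ay)\mid u$ (i.e. $u=y(x-ay)q$ for a formal power series $q$) does not converge in any neighborhood of the origin. Specifically, one can take $f=\sum_{m\ge0}R^{-m}\bar z^m$ with $\bar z=x-iy$.
   Context: $\Delta$ is the Laplace operator on $\mathbb R^2$. $B_R=\{(x,y): x^2+y^2<R^2\}$ and $A(B_R)$ denotes the algebra of all $C^\infty$ functions $f:B_R\to\mathbb C$ such that for every compact $K\subset B_R$ the homogeneous Taylor series $\sum_m f_m$ of $f$ at $0$ converges absolutely and uniformly to $f$ on $K$. When $A$ is not a root of unity, the formal problem has a unique formal power series solution. *)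

theory Defs
  imports "HOL-Analysis.Analysis"
begin

text \<open>Points of R^2 are pairs (x,y) :: real \<times> real (the product metric is Euclidean).\<close>

definition pdx :: "(real \<times> real \<Rightarrow> complex) \<Rightarrow> real \<times> real \<Rightarrow> complex" where
  "pdx g p = vector_derivative (\<lambda>t. g (t, snd p)) (at (fst p))"

definition pdy :: "(real \<times> real \<Rightarrow> complex) \<Rightarrow> real \<times> real \<Rightarrow> complex" where
  "pdy g p = vector_derivative (\<lambda>t. g (fst p, t)) (at (snd p))"

inductive_set partials :: "(real \<times> real \<Rightarrow> complex) \<Rightarrow> (real \<times> real \<Rightarrow> complex) set"
  for f where
  base: "f \<in> partials f"
| dx: "g \<in> partials f \<Longrightarrow> pdx g \<in> partials f"
| dy: "g \<in> partials f \<Longrightarrow> pdy g \<in> partials f"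

definition smooth_on :: "(real \<times> real) set \<Rightarrow> (real \<times> real \<Rightarrow> complex) \<Rightarrow> bool" where
  "smooth_on S f \<longleftrightarrow> (\<forall>g\<in>partials f. g differentiable_on S)"

definition taylor_coeff :: "(real \<times> real \<Rightarrow> complex) \<Rightarrow> nat \<Rightarrow> nat \<Rightarrow> complex" where
  "taylor_coeff f i j = ((pdx ^^ i) ((pdy ^^ j) f)) (0, 0) / (fact i * fact j)"

definition taylor_hom :: "(real \<times> real \<Rightarrow> complex) \<Rightarrow> nat \<Rightarrow> real \<times> real \<Rightarrow> complex" where
  "taylor_hom f m p = (\<Sum>i\<le>m. taylor_coeff f i (m - i) * of_real (fst p) ^ i * of_real (snd p) ^ (m - i))"

definition algA :: "real \<Rightarrow> (real \<times> real \<Rightarrow> complex) set" where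
  "algA R = {f. smooth_on (ball (0,0) R) f \<and>
     (\<forall>K. compact K \<and> K \<subseteq> ball (0,0) R \<longrightarrow>
        uniformly_convergent_on K (\<lambda>n p. \<Sum>m<n. norm (taylor_hom f m p)) \<and>
        uniform_limit K (\<lambda>n p. \<Sum>m<n. taylor_hom f m p) f sequentially)}"

text \<open>Formal power series in x,y: coefficient functions c i j of x^i y^j.\<close>
definition fps_lap :: "(nat \<Rightarrow> nat \<Rightarrow> complex) \<Rightarrow> nat \<Rightarrow> nat \<Rightarrow> complex" where
  "fps_lap u i j = of_nat ((i+2)*(i+1)) * u (i+2) j + of_nat ((j+2)*(j+1)) * u i (j+2)"

text \<open>Coefficients of y (x - a y) q.\<close>
definition mult_goursat :: "real \<Rightarrow> (nat \<Rightarrow> nat \<Rightarrow> complex) \<Rightarrow> nat \<Rightarrow> nat \<Rightarrow> complex" where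
  "mult_goursat a q i j =
     (if 1 \<le> i \<and> 1 \<le> j then q (i - 1) (j - 1) else 0)
     - of_real a * (if 2 \<le> j then q i (j - 2) else 0)"

definition goursat_sol :: "real \<Rightarrow> (real \<times> real \<Rightarrow> complex) \<Rightarrow> (nat \<Rightarrow> nat \<Rightarrow> complex) \<Rightarrow> bool" where
  "goursat_sol a f u \<longleftrightarrow>
     (\<forall>i j. fps_lap u i j = taylor_coeff f i j) \<and>
     (\<exists>q. \<forall>i j. u i j = mult_goursat a q i j)"

definition fps2_converges_near0 :: "(nat \<Rightarrow> nat \<Rightarrow> complex) \<Rightarrow> bool" where
  "fps2_converges_near0 u \<longleftrightarrow> (\<exists>r>0. \<forall>p\<in>ball (0,0) r.
     (\<lambda>(i,j). u i j * of_real (fst p) ^ i * of_real (snd p) ^ j) summable_on UNIV)"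

end

theory Submission
  imports Defs
begin



lemma binom1: "Suc k * (n choose Suc k) = (n - k) * (n choose k)"
  by (metis binomial_absorption binomial_absorb_comp)

lemma binom2: "(n - k) * (n - Suc k) * (n choose k) = Suc (Suc k) * Suc k * (n choose Suc (Suc k))"
proof -
  have "Suc (Suc k) * Suc k * (n choose Suc (Suc k)) = Suc k * (Suc (Suc k) * (n choose Suc (Suc k)))" by (simp only: mult.assoc mult.left_commute)
  also have "\<dots> = Suc k * ((n - Suc k) * (n choose Suc k))" using binom1[of "Suc k" n] by simp
  also have "\<dots> = (n - Suc k) * (Suc k * (n choose Suc k))" by (simp only: mult.left_commute)
  also have "\<dots> = (n - Suc k) * ((n - k) * (n choose k))" using binom1[of k n] by simp
  finally show ?thesis by simp
qed

lemma lin_aux: "(A::complex)*x + B*y = 0 \<Longrightarrow> B*(K*y) = -(A*(K*x))"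
proof -
  assume "A*x + B*y = 0"
  then have "B*y = -(A*x)" by (simp add: eq_neg_iff_add_eq_0 add.commute)
  then have "K*(B*y) = K*(-(A*x))" by simp
  then show ?thesis by (simp add: ac_simps)
qed

definition hcoef :: "nat \<Rightarrow> nat \<Rightarrow> complex" where
  "hcoef n j = of_nat (n choose j) * (\<i>^j - (-\<i>)^j)"

lemma lap_shape:
  fixes p p2 :: complex
  assumes "A*B = Q + Z" "C*D = Q" "p2 = -p"
  shows "of_nat A * (of_nat B * p) + of_nat C * (of_nat D * p2) = of_nat Z * p"
proof -
  have 1: "of_nat A * (of_nat B * p) = of_nat Q * p + of_nat Z * p"
    by (simp only: mult.assoc[symmetric] of_nat_mult[symmetric] assms(1) of_nat_add distrib_right)
  have 2: "of_nat C * (of_nat D * p2) = - (of_nat Q * p)"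
    by (simp only: mult.assoc[symmetric] of_nat_mult[symmetric] assms(2,3) mult_minus_right)
  show ?thesis unfolding 1 2 by simp
qed

lemma hcoef_rec:
  assumes "k + 2 \<le> n"
  shows "of_nat ((n-k)*(n-k-1)) * hcoef n k + of_nat ((k+2)*(k+1)) * hcoef n (k+2) = 0"
proof -
  have e: "(n-k)*(n-k-1) * (n choose k) = (k+2)*(k+1)*(n choose (k+2)) + 0"
    using binom2[of n k] by (simp add: numeral_2_eq_2)
  have "(\<i>::complex)^(k+2) = \<i>^k * \<i>^2" "(-\<i>::complex)^(k+2) = (-\<i>)^k * (-\<i>)^2" by (simp_all only: power_add)
  then have p: "(\<i>::complex)^(k+2) - (-\<i>)^(k+2) = - (\<i>^k - (-\<i>)^k)" by simp
  from lap_shape[OF e refl p] show ?thesis unfolding hcoef_def by simp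
qed

lemma sum_hcoef:
  "(\<Sum>l\<le>n. complex_of_real a ^ (n-l) * hcoef n l) = (of_real a + \<i>)^n - (of_real a - \<i>)^n"
proof -
  have 1: "(\<i> + of_real a)^n = (\<Sum>l\<le>n. of_nat (n choose l) * \<i>^l * complex_of_real a ^ (n-l))"
    by (rule binomial_ring)
  have 2: "((-\<i>) + of_real a)^n = (\<Sum>l\<le>n. of_nat (n choose l) * (-\<i>)^l * complex_of_real a ^ (n-l))"
    by (rule binomial_ring)
  have "(\<Sum>l\<le>n. complex_of_real a ^ (n-l) * hcoef n l) =
     (\<Sum>l\<le>n. of_nat (n choose l) * \<i>^l * complex_of_real a ^ (n-l)) -
     (\<Sum>l\<le>n. of_nat (n choose l) * (-\<i>)^l * complex_of_real a ^ (n-l))"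
    unfolding hcoef_def sum_subtractf[symmetric] by (rule sum.cong) (auto simp: algebra_simps)
  also have "\<dots> = (of_real a + \<i>)^n - (of_real a - \<i>)^n"
    using 1 2 by (simp add: add.commute)
  finally show ?thesis .
qed

lemma kernel_zero:
  fixes w :: "nat \<Rightarrow> nat \<Rightarrow> complex"
  assumes lap: "\<And>i j. fps_lap w i j = 0"
    and w0: "\<And>n. w n 0 = 0"
    and ws: "\<And>n. (\<Sum>l\<le>n. complex_of_real a ^ (n-l) * w (n-l) l) = 0"
    and nr: "\<And>n. n > 0 \<Longrightarrow> (complex_of_real a + \<i>)^n \<noteq> (of_real a - \<i>)^n"
  shows "w i j = 0"
proof -
  define n where "n = i + j"
  show ?thesis
  proof (cases "n = 0")
    case True
    then show ?thesis using ws[of 0] n_def by simp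
  next
    case False
    define K where "K = 2 * \<i> * of_nat n"
    define c where "c = w (n-1) 1"
    have claim: "K * w (n-k) k = c * hcoef n k" if "k \<le> n" for k
      using that
    proof (induction k rule: less_induct)
      case (less k)
      show ?case
      proof (cases k)
        case 0
        then show ?thesis using w0 by (simp add: hcoef_def)
      next
        case (Suc k1)
        show ?thesis
        proof (cases k1)
          case 0
          then show ?thesis using Suc by (simp add: hcoef_def K_def c_def)
        next
          case (Suc k2)
          have k: "k = k2 + 2" using Suc \<open>k = Suc k1\<close> by simp
          have IH: "K * w (n-k2) k2 = c * hcoef n k2" using less k by simp
          have L: "fps_lap w (n-k2-2) k2 = 0" by (rule lap)
          have nk: "n - k2 - 2 + 2 = n - k2" "n - k2 - 2 + 1 = n - k2 - 1" using less k by auto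
          have L': "of_nat ((n-k2)*(n-k2-1)) * w (n-k2) k2 + of_nat ((k2+2)*(k2+1)) * w (n-k2-2) (k2+2) = 0"
            using L unfolding fps_lap_def nk .
          have H: "of_nat ((n-k2)*(n-k2-1)) * hcoef n k2 + of_nat ((k2+2)*(k2+1)) * hcoef n (k2+2) = 0"
            using hcoef_rec less k by simp
          have "of_nat ((k2+2)*(k2+1)) * (K * w (n-k2-2) (k2+2)) = - (of_nat ((n-k2)*(n-k2-1)) * (K * w (n-k2) k2))"
            by (rule lin_aux[OF L'])
          also have "\<dots> = - (of_nat ((n-k2)*(n-k2-1)) * (c * hcoef n k2))" using IH by simp
          also have "\<dots> = of_nat ((k2+2)*(k2+1)) * (c * hcoef n (k2+2))"
            by (rule lin_aux[OF H, symmetric])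
          finally have fin: "of_nat ((k2+2)*(k2+1)) * (K * w (n-k2-2) (k2+2)) = of_nat ((k2+2)*(k2+1)) * (c * hcoef n (k2+2))" .
          then have "K * w (n-k2-2) (k2+2) = c * hcoef n (k2+2)"
          proof -
            have nz: "(of_nat ((k2+2)*(k2+1)) :: complex) \<noteq> 0" by (simp only: of_nat_eq_0_iff) simp
            show ?thesis using mult_left_cancel[OF nz] fin by blast
          qed
          moreover have "n - k = n - k2 - 2" using k by simp
          ultimately show ?thesis using k by simp
        qed
      qed
    qed
    have "K * (\<Sum>l\<le>n. complex_of_real a ^ (n-l) * w (n-l) l) = (\<Sum>l\<le>n. complex_of_real a ^ (n-l) * (K * w (n-l) l))"
      by (simp add: sum_distrib_left algebra_simps)
    also have "\<dots> = (\<Sum>l\<le>n. complex_of_real a ^ (n-l) * (c * hcoef n l))"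
      by (rule sum.cong) (auto simp: claim)
    also have "\<dots> = c * ((of_real a + \<i>)^n - (of_real a - \<i>)^n)"
      by (simp only: sum_hcoef[symmetric] sum_distrib_left) (simp add: ac_simps)
    finally have "c * ((of_real a + \<i>)^n - (of_real a - \<i>)^n) = 0" using ws[of n] by simp
    then have "c = 0" using nr[of n] False by simp
    then have "K * w (n-j) j = 0" using claim[of j] n_def by simp
    moreover have "K \<noteq> 0" using False by (simp add: K_def)
    ultimately show ?thesis using n_def by simp
  qed
qed




lemma tele: "(\<Sum>l\<le>(n::nat). (G l - G (l - 1)) :: complex) = G n - G 0"
  by (induction n) auto

lemma mg_zero: "mult_goursat a q n 0 = 0"
  by (simp add: mult_goursat_def)

lemma mg_sum: "(\<Sum>l\<le>n. complex_of_real a ^ (n-l) * mult_goursat a q (n-l) l) = 0"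
proof -
  define G where "G l = (if 1 \<le> l \<and> l < n then complex_of_real a ^ (n-l) * q (n-l-1) (l-1) else 0)" for l
  have "complex_of_real a ^ (n-l) * mult_goursat a q (n-l) l = G l - G (l - 1)" if "l \<le> n" for l
  proof -
    have c1: "(1 \<le> n-l \<and> 1 \<le> l) = (1 \<le> l \<and> l < n)" using that by auto
    have A: "complex_of_real a ^ (n-l) * (if 1 \<le> n-l \<and> 1 \<le> l then q (n-l-1) (l-1) else 0) = G l"
      unfolding G_def c1 by simp
    have B: "complex_of_real a ^ (n-l) * (of_real a * (if 2 \<le> l then q (n-l) (l-2) else 0)) = G (l - 1)"
    proof (cases "2 \<le> l")
      case True
      then have e: "n - (l - 1) = Suc (n - l)" "n - (l-1) - 1 = n - l" "l - 1 - 1 = l - 2"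
        and c: "1 \<le> l - 1 \<and> l - 1 < n" using that by auto
      have "G (l - 1) = complex_of_real a ^ Suc (n - l) * q (n - l) (l - 2)"
        unfolding G_def e using c by simp
      then show ?thesis using True by simp
    next
      case False
      then have c: "\<not> (1 \<le> l - 1 \<and> l - 1 < n)" by auto
      show ?thesis using False unfolding G_def using c by simp
    qed
    have "complex_of_real a ^ (n-l) * mult_goursat a q (n-l) l =
       complex_of_real a ^ (n-l) * (if 1 \<le> n-l \<and> 1 \<le> l then q (n-l-1) (l-1) else 0)
       - complex_of_real a ^ (n-l) * (of_real a * (if 2 \<le> l then q (n-l) (l-2) else 0))"
      unfolding mult_goursat_def by (rule right_diff_distrib)
    then show ?thesis unfolding A B .
  qed
  then have "(\<Sum>l\<le>n. complex_of_real a ^ (n-l) * mult_goursat a q (n-l) l) = (\<Sum>l\<le>n. (G l - G (l - 1)))"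
    by (intro sum.cong) auto
  also have "\<dots> = G n - G 0" by (rule tele)
  also have "\<dots> = 0" by (simp add: G_def)
  finally show ?thesis .
qed

lemma mg_exists:
  fixes u :: "nat \<Rightarrow> nat \<Rightarrow> complex"
  assumes w0: "\<And>n. u n 0 = 0"
    and ws: "\<And>n. (\<Sum>l\<le>n. complex_of_real a ^ (n-l) * u (n-l) l) = 0"
  shows "\<exists>q. \<forall>i j. u i j = mult_goursat a q i j"
proof -
  define q where "q i j = (\<Sum>l\<le>j. complex_of_real a ^ (j-l) * u (i+1+j-l) (l+1))" for i j
  have mg1: "mult_goursat a q i 0 = 0" for i by (simp add: mult_goursat_def)
  have mg2: "mult_goursat a q (Suc i) (Suc 0) = q i 0" for i by (simp add: mult_goursat_def)
  have mg3: "mult_goursat a q (Suc i) (Suc (Suc j)) = q i (Suc j) - of_real a * q (Suc i) j" for i j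
    by (simp add: mult_goursat_def)
  have mg4: "mult_goursat a q 0 (Suc 0) = 0" by (simp add: mult_goursat_def)
  have mg5: "mult_goursat a q 0 (Suc (Suc j)) = - (of_real a * q 0 j)" for j
    by (simp add: mult_goursat_def)
  have "u i j = mult_goursat a q i j" for i j
  proof (cases j)
    case 0
    then show ?thesis using w0 mg1 by simp
  next
    case (Suc j1)
    show ?thesis
    proof (cases i)
      case (Suc i1)
      show ?thesis
      proof (cases j1)
        case 0
        then show ?thesis using Suc \<open>j = Suc j1\<close> mg2 by (simp add: q_def)
      next
        case (Suc j2)
        have "q i1 (Suc j2) = (\<Sum>l\<le>j2. complex_of_real a ^ (Suc j2-l) * u (i1+1+Suc j2-l) (l+1)) + u (Suc i1) (Suc (Suc j2))"
          unfolding q_def by (simp only: sum.atMost_Suc) simp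
        also have "(\<Sum>l\<le>j2. complex_of_real a ^ (Suc j2-l) * u (i1+1+Suc j2-l) (l+1)) = of_real a * q (Suc i1) j2"
          unfolding q_def sum_distrib_left
        proof (intro sum.cong refl)
          fix l assume "l \<in> {..j2}"
          then have e: "Suc j2 - l = Suc (j2 - l)" "i1+1+Suc j2-l = Suc i1+1+j2-l" by auto
          show "complex_of_real a ^ (Suc j2-l) * u (i1+1+Suc j2-l) (l+1) = of_real a * (complex_of_real a ^ (j2-l) * u (Suc i1+1+j2-l) (l+1))"
            unfolding e by simp
        qed
        finally show ?thesis using Suc \<open>j = Suc j1\<close> \<open>i = Suc i1\<close> mg3 by simp
      qed
    next
      case 0
      show ?thesis
      proof (cases j1)
        case 0
        have "(\<Sum>l\<le>1. complex_of_real a ^ (1-l) * u (1-l) l) = of_real a * u 1 0 + u 0 1"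
          by (simp add: numeral_eq_Suc)
        then have "u 0 1 = 0" using ws[of 1] w0[of 1] by simp
        then show ?thesis using 0 \<open>j = Suc j1\<close> \<open>i = 0\<close> mg4 by simp
      next
        case (Suc j2)
        have "0 = (\<Sum>l\<le>Suc (Suc j2). complex_of_real a ^ (Suc (Suc j2)-l) * u (Suc (Suc j2)-l) l)"
          using ws by simp
        also have "\<dots> = complex_of_real a ^ (Suc (Suc j2)) * u (Suc (Suc j2)) 0 + (\<Sum>l\<le>Suc j2. complex_of_real a ^ (Suc j2-l) * u (Suc j2-l) (Suc l))"
          by (simp only: sum.atMost_Suc_shift) simp
        also have "\<dots> = (\<Sum>l\<le>j2. complex_of_real a ^ (Suc j2-l) * u (Suc j2-l) (Suc l)) + u 0 (Suc (Suc j2))"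
          using w0 by simp
        also have "(\<Sum>l\<le>j2. complex_of_real a ^ (Suc j2-l) * u (Suc j2-l) (Suc l)) = of_real a * q 0 j2"
          unfolding q_def sum_distrib_left
        proof (intro sum.cong refl)
          fix l assume "l \<in> {..j2}"
          then have e: "Suc j2 - l = Suc (j2 - l)" "0+1+j2-l = Suc j2 - l" by auto
          show "complex_of_real a ^ (Suc j2-l) * u (Suc j2-l) (Suc l) = of_real a * (complex_of_real a ^ (j2-l) * u (0+1+j2-l) (l+1))"
            unfolding e by simp
        qed
        finally have "u 0 (Suc (Suc j2)) = - (of_real a * q 0 j2)" by (simp add: eq_neg_iff_add_eq_0 add.commute)
        then show ?thesis using Suc \<open>j = Suc j1\<close> \<open>i = 0\<close> mg5 by simp
      qed
    qed
  qed
  then show ?thesis by blast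
qed




definition Tc :: "real \<Rightarrow> nat \<Rightarrow> nat \<Rightarrow> complex" where
  "Tc R i j = of_nat ((i+j) choose j) * (-\<i>)^j / of_real R ^ (i+j)"

definition sN :: "real \<Rightarrow> nat \<Rightarrow> complex" where
  "sN R n = 1 / (2 * of_nat (n-1) * of_real R ^ (n-2))"
definition DN :: "real \<Rightarrow> nat \<Rightarrow> complex" where
  "DN a n = (of_real a + \<i>)^n - (of_real a - \<i>)^n"
definition alN :: "real \<Rightarrow> real \<Rightarrow> nat \<Rightarrow> complex" where
  "alN a R n = - \<i> * sN R n * (of_real a - \<i>)^(n-1) / DN a n"
definition beN :: "real \<Rightarrow> real \<Rightarrow> nat \<Rightarrow> complex" where
  "beN a R n = - sN R n - alN a R n"
definition usol :: "real \<Rightarrow> real \<Rightarrow> nat \<Rightarrow> nat \<Rightarrow> complex" where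
  "usol a R i j = (if i + j < 2 then 0 else
      sN R (i+j) * of_nat ((i+j-1) choose j) * (-\<i>)^j
    + alN a R (i+j) * of_nat ((i+j) choose j) * \<i>^j
    + beN a R (i+j) * of_nat ((i+j) choose j) * (-\<i>)^j)"

lemma lapE:
  fixes w :: complex
  assumes "w^2 = -1"
  shows "of_nat ((i+2)*(i+1)) * (of_nat ((i+j+2) choose j) * w^j)
       + of_nat ((j+2)*(j+1)) * (of_nat ((i+j+2) choose (j+2)) * w^(j+2)) = 0"
proof -
  have b: "(i+2) * (i+1) * ((i+j+2) choose j) = (j+2)*(j+1)*((i+j+2) choose (j+2)) + 0"
    using binom2[of "i+j+2" j] by (simp add: numeral_2_eq_2)
  have "w^(j+2) = w^j * w^2" by (simp only: power_add)
  then have "w^(j+2) = -(w^j)" using assms by simp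
  from lap_shape[OF b refl this] show ?thesis by simp
qed

lemma lapV:
  "of_nat ((i+2)*(i+1)) * (of_nat ((i+j+1) choose j) * (-\<i>)^j)
       + of_nat ((j+2)*(j+1)) * (of_nat ((i+j+1) choose (j+2)) * (-\<i>)^(j+2))
   = of_nat (2 * (i+j+1) * ((i+j) choose j)) * (-\<i>)^j"
proof -
  have b: "(i+1) * i * ((i+j+1) choose j) = (j+2)*(j+1)*((i+j+1) choose (j+2))"
    using binom2[of "i+j+1" j] by (simp add: numeral_2_eq_2)
  have b2: "(i+1) * ((i+j+1) choose j) = (i+j+1) * ((i+j) choose j)"
    using binomial_absorb_comp[of "i+j+1" j] by simp
  have 2: "(i+2)*(i+1)*((i+j+1) choose j) = (j+2)*(j+1)*((i+j+1) choose (j+2)) + 2 * (i+j+1) * ((i+j) choose j)"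
    using b b2 by (simp add: algebra_simps)
  have "(-\<i>)^(j+2) = (-\<i>)^j * (-\<i>)^2" by (simp only: power_add)
  then have "(-\<i>)^(j+2) = -((-\<i>)^j)" by simp
  from lap_shape[OF 2 refl this] show ?thesis .
qed

lemma Rpos_sN_aux: "R > 0 \<Longrightarrow> N > 0 \<Longrightarrow>
   (1 / (2 * of_nat N * of_real R ^ k)) * of_nat (2*N*C) = (of_nat C / of_real R ^ k :: complex)"
  by (simp add: field_simps)

lemma Rpos_sN: "R > 0 \<Longrightarrow> sN R (i+j+2) * of_nat (2 * (i+j+1) * C) = of_nat C / of_real R ^ (i+j)"
proof -
  assume "R > 0"
  have "sN R (i+j+2) = 1 / (2 * of_nat (i+j+1) * of_real R ^ (i+j))" by (simp add: sN_def)
  then show ?thesis using Rpos_sN_aux[OF \<open>R > 0\<close>, of "i+j+1" "i+j" C] by simp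
qed

lemma usol_lap:
  assumes "R > 0"
  shows "fps_lap (usol a R) i j = Tc R i j"
proof -
  define n where "n = i + j + 2"
  have e1: "i + 2 + j = n" "i + (j+2) = n" "n - 1 = i+j+1" using n_def by auto
  have u1: "usol a R (i+2) j = sN R n * of_nat ((i+j+1) choose j) * (-\<i>)^j
    + alN a R n * of_nat ((i+j+2) choose j) * \<i>^j
    + beN a R n * of_nat ((i+j+2) choose j) * (-\<i>)^j"
    unfolding usol_def e1 by (simp add: n_def)
  have u2: "usol a R i (j+2) = sN R n * of_nat ((i+j+1) choose (j+2)) * (-\<i>)^(j+2)
    + alN a R n * of_nat ((i+j+2) choose (j+2)) * \<i>^(j+2)
    + beN a R n * of_nat ((i+j+2) choose (j+2)) * (-\<i>)^(j+2)"
    unfolding usol_def e1 by (simp add: n_def)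
  have E1: "of_nat ((i+2)*(i+1)) * (of_nat ((i+j+2) choose j) * \<i>^j)
       + of_nat ((j+2)*(j+1)) * (of_nat ((i+j+2) choose (j+2)) * \<i>^(j+2)) = 0"
    by (rule lapE) (simp add: power2_eq_square)
  have E2: "of_nat ((i+2)*(i+1)) * (of_nat ((i+j+2) choose j) * (-\<i>)^j)
       + of_nat ((j+2)*(j+1)) * (of_nat ((i+j+2) choose (j+2)) * (-\<i>)^(j+2)) = 0"
    by (rule lapE) (simp add: power2_eq_square)
  have "fps_lap (usol a R) i j =
     sN R n * (of_nat ((i+2)*(i+1)) * (of_nat ((i+j+1) choose j) * (-\<i>)^j)
       + of_nat ((j+2)*(j+1)) * (of_nat ((i+j+1) choose (j+2)) * (-\<i>)^(j+2)))
   + alN a R n * (of_nat ((i+2)*(i+1)) * (of_nat ((i+j+2) choose j) * \<i>^j)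
       + of_nat ((j+2)*(j+1)) * (of_nat ((i+j+2) choose (j+2)) * \<i>^(j+2)))
   + beN a R n * (of_nat ((i+2)*(i+1)) * (of_nat ((i+j+2) choose j) * (-\<i>)^j)
       + of_nat ((j+2)*(j+1)) * (of_nat ((i+j+2) choose (j+2)) * (-\<i>)^(j+2)))"
    unfolding fps_lap_def u1 u2 by (simp only: distrib_left mult_ac add_ac)
  also have "\<dots> = sN R n * (of_nat (2 * (i+j+1) * ((i+j) choose j)) * (-\<i>)^j)"
    unfolding E1 E2 lapV by simp
  also have "\<dots> = (sN R (i+j+2) * of_nat (2 * (i+j+1) * ((i+j) choose j))) * (-\<i>)^j"
    unfolding n_def by (simp only: mult_ac)
  also have "\<dots> = Tc R i j"
    unfolding Rpos_sN[OF assms] Tc_def by simp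
  finally show ?thesis .
qed




lemma binA: "(\<Sum>l\<le>N. c^(N-l) * (of_nat (N choose l) * w^l)) = (w + c :: complex)^N"
  by (subst binomial_ring) (simp add: ac_simps)

lemma binV: "(\<Sum>l\<le>Suc N. c^(Suc N-l) * (of_nat (N choose l) * w^l)) = c * (w + c :: complex)^N"
proof -
  have "(\<Sum>l\<le>Suc N. c^(Suc N-l) * (of_nat (N choose l) * w^l)) = (\<Sum>l\<le>N. c^(Suc N-l) * (of_nat (N choose l) * w^l))"
    by simp
  also have "\<dots> = (\<Sum>l\<le>N. c * (c^(N-l) * (of_nat (N choose l) * w^l)))"
    by (intro sum.cong) (auto simp: Suc_diff_le)
  also have "\<dots> = c * (w + c)^N" by (simp add: sum_distrib_left[symmetric] binA)
  finally show ?thesis .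
qed

lemma bin1: "(\<Sum>l\<le>N. of_nat (N choose l) * x^l) = (x + 1 :: complex)^N"
proof -
  have "(\<Sum>l\<le>N. of_nat (N choose l) * x^l) = (\<Sum>l\<le>N. 1^(N-l) * (of_nat (N choose l) * x^l))" by simp
  also have "\<dots> = (x+1)^N" by (rule binA)
  finally show ?thesis .
qed

lemma usol_0: "usol a R n 0 = 0"
  by (simp add: usol_def beN_def)

lemma usol_deg:
  assumes "l \<le> n" "2 \<le> n"
  shows "usol a R (n-l) l = sN R n * (of_nat ((n-1) choose l) * (-\<i>)^l)
    + alN a R n * (of_nat (n choose l) * \<i>^l) + beN a R n * (of_nat (n choose l) * (-\<i>)^l)"
  using assms by (simp add: usol_def)

lemma usol_sum:
  assumes nr: "DN a n \<noteq> 0 \<or> n < 2"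
  shows "(\<Sum>l\<le>n. complex_of_real a ^ (n-l) * usol a R (n-l) l) = 0"
proof (cases "n < 2")
  case True
  then show ?thesis by (simp add: usol_def)
next
  case False
  then obtain N where N: "n = Suc N" by (cases n) auto
  let ?c = "complex_of_real a"
  have "(\<Sum>l\<le>n. ?c ^ (n-l) * usol a R (n-l) l) =
     sN R n * (\<Sum>l\<le>Suc N. ?c ^ (Suc N-l) * (of_nat (N choose l) * (-\<i>)^l))
   + alN a R n * (\<Sum>l\<le>n. ?c ^ (n-l) * (of_nat (n choose l) * \<i>^l))
   + beN a R n * (\<Sum>l\<le>n. ?c ^ (n-l) * (of_nat (n choose l) * (-\<i>)^l))"
    using False unfolding sum_distrib_left sum.distrib[symmetric] N
    by (intro sum.cong) (auto simp: usol_deg algebra_simps)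
  also have "\<dots> = sN R n * (?c * (?c - \<i>)^N) + alN a R n * (?c + \<i>)^n + beN a R n * (?c - \<i>)^n"
    unfolding binV binA by (simp add: add.commute)
  also have "\<dots> = 0"
  proof -
    have D: "DN a n \<noteq> 0" using nr False by simp
    have al: "alN a R n * DN a n = - \<i> * sN R n * (?c - \<i>)^N"
      using D N by (simp add: alN_def)
    have "sN R n * (?c * (?c - \<i>)^N) + alN a R n * (?c + \<i>)^n + beN a R n * (?c - \<i>)^n
        = sN R n * (?c * (?c - \<i>)^N) + alN a R n * DN a n - sN R n * (?c - \<i>)^n"
      by (simp add: beN_def DN_def algebra_simps)
    also have "\<dots> = alN a R n * DN a n + \<i> * sN R n * (?c - \<i>)^N" unfolding N by (simp add: algebra_simps)
    also have "\<dots> = 0" using al by simp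
    finally show ?thesis .
  qed
  finally show ?thesis .
qed

lemma usol_ev:
  assumes "2 \<le> n"
  shows "(\<Sum>j\<le>n. usol a R (n-j) j * (-\<i>)^j) = alN a R n * 2^n"
proof -
  obtain N where N: "n = Suc N" using assms by (cases n) auto
  have p1: "(-\<i>)^l * (-\<i>)^l = (-1::complex)^l" for l
    by (simp add: power_mult_distrib[symmetric])
  have p2: "\<i>^l * (-\<i>)^l = (1::complex)" for l
    by (simp add: power_mult_distrib[symmetric])
  have trm: "usol a R (n-j) j * (-\<i>)^j = sN R n * (of_nat (N choose j) * (-1)^j)
    + alN a R n * (of_nat (n choose j) * 1^j) + beN a R n * (of_nat (n choose j) * (-1)^j)" if "j \<le> n" for j
  proof -
    have "usol a R (n-j) j * (-\<i>)^j = sN R n * (of_nat ((n-1) choose j) * ((-\<i>)^j * (-\<i>)^j))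
    + alN a R n * (of_nat (n choose j) * (\<i>^j * (-\<i>)^j)) + beN a R n * (of_nat (n choose j) * ((-\<i>)^j * (-\<i>)^j))"
      by (simp only: usol_deg[OF that assms] distrib_right mult.assoc)
    then show ?thesis unfolding p1 p2 N by simp
  qed
  have "(\<Sum>j\<le>n. usol a R (n-j) j * (-\<i>)^j) =
     sN R n * (\<Sum>l\<le>Suc N. of_nat (N choose l) * (-1)^l)
   + alN a R n * (\<Sum>l\<le>n. of_nat (n choose l) * 1^l)
   + beN a R n * (\<Sum>l\<le>n. of_nat (n choose l) * (-1)^l)"
    unfolding sum_distrib_left sum.distrib[symmetric] N[symmetric]
    by (intro sum.cong refl) (simp add: trm)
  also have "(\<Sum>l\<le>Suc N. of_nat (N choose l) * (-1::complex)^l) = (\<Sum>l\<le>N. of_nat (N choose l) * (-1)^l)"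
    by simp
  also have "\<dots> = 0" unfolding bin1 using assms N by simp
  also have "(\<Sum>l\<le>n. of_nat (n choose l) * (-1::complex)^l) = 0" unfolding bin1 using assms by simp
  also have "(\<Sum>l\<le>n. of_nat (n choose l) * (1::complex)^l) = 2^n" unfolding bin1 by simp
  finally show ?thesis by simp
qed




lemma usol_unique:
  fixes u :: "nat \<Rightarrow> nat \<Rightarrow> complex"
  assumes nr: "\<And>n. n > 0 \<Longrightarrow> DN a n \<noteq> 0" and R: "R > 0"
    and lap: "\<And>i j. fps_lap u i j = Tc R i j"
    and q: "\<And>i j. u i j = mult_goursat a q i j"
  shows "u i j = usol a R i j"
proof -
  define w where "w i j = u i j - usol a R i j" for i j
  have "w i j = 0"
  proof (rule kernel_zero[where a=a])
    show "fps_lap w i j = 0" for i j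
    proof -
      have "fps_lap w i j = fps_lap u i j - fps_lap (usol a R) i j"
        unfolding fps_lap_def w_def by (simp add: algebra_simps)
      then show ?thesis using lap usol_lap[OF R] by simp
    qed
    show "w n 0 = 0" for n unfolding w_def q by (simp add: mg_zero usol_0)
    show "(\<Sum>l\<le>n. complex_of_real a ^ (n-l) * w (n-l) l) = 0" for n
    proof -
      have "(\<Sum>l\<le>n. complex_of_real a ^ (n-l) * w (n-l) l) =
        (\<Sum>l\<le>n. complex_of_real a ^ (n-l) * mult_goursat a q (n-l) l) - (\<Sum>l\<le>n. complex_of_real a ^ (n-l) * usol a R (n-l) l)"
        unfolding w_def q sum_subtractf[symmetric] by (simp add: algebra_simps)
      also have "\<dots> = 0"
      proof -
        have "DN a n \<noteq> 0 \<or> n < 2" using nr by (cases "n = 0") auto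
        then show ?thesis by (simp add: mg_sum usol_sum)
      qed
      finally show ?thesis .
    qed
    show "(complex_of_real a + \<i>)^n \<noteq> (of_real a - \<i>)^n" if "n > 0" for n
      using nr[OF that] by (simp add: DN_def)
  qed
  then show ?thesis by (simp add: w_def)
qed

lemma real_step:
  fixes \<rho> R x Q M al :: real
  assumes "0 < \<rho>" "0 < R" "0 < x" "0 < Q" "0 \<le> M" "2 \<le> n"
    and b: "al * 2^n * \<rho>^n \<le> M"
    and al: "al = 1 / (2 * (real n - 1) * R^(n-2) * x * Q)"
  shows "M > 0 \<and> (R^2 / (M * x)) * (\<rho>/R)^n \<le> Q"
proof -
  have n1: "2 * (real n - 1) \<le> 2^n"
  proof -
    have a: "n - 1 < 2^(n-1)" by (rule less_exp)
    have b: "(2::nat)^n = 2 * 2^(n-1)" using assms(6) by (cases n) auto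
    have "2*(n-1) \<le> (2::nat)^n" using a b by linarith
    then have "real (2*(n-1)) \<le> real (2^n)" by (simp only: of_nat_le_iff)
    then show ?thesis using assms(6) by (simp add: of_nat_diff)
  qed
  have pos: "0 < 2 * (real n - 1) * R^(n-2) * x * Q" using assms by simp
  define P where "P = 2 * (real n - 1) * R^(n-2) * x * Q"
  have "2^n * \<rho>^n / P \<le> M" using b unfolding al P_def[symmetric] by simp
  then have "2^n * \<rho>^n \<le> M * P" using pos unfolding P_def[symmetric] by (simp add: pos_divide_le_eq)
  then have "2^n * \<rho>^n \<le> M * (2 * (real n - 1) * R^(n-2) * x * Q)" unfolding P_def .
  also have "\<dots> \<le> M * (2^n * R^(n-2) * x * Q)"
    using n1 assms by (intro mult_left_mono mult_right_mono) auto
  finally have 1: "2^n * \<rho>^n \<le> 2^n * (M * R^(n-2) * x * Q)" by (simp add: ac_simps)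
  then have 2: "\<rho>^n \<le> M * R^(n-2) * x * Q" by simp
  have "0 < \<rho>^n" using assms by simp
  then have Mp: "M > 0" using 2 assms(5) by (cases "M = 0") auto
  have Rn: "R^n = R^2 * R^(n-2)" using assms(6) by (metis le_add_diff_inverse power_add)
  have "(R^2 / (M * x)) * (\<rho>/R)^n = \<rho>^n / (M * x * R^(n-2))"
    using assms Mp by (simp add: power_divide Rn field_simps)
  also have "\<dots> \<le> Q" using 2 assms Mp by (simp add: divide_le_eq ac_simps)
  finally show ?thesis using Mp by simp
qed




lemma Xnz: "(complex_of_real a - \<i>) \<noteq> 0"
  by (simp add: complex_eq_iff)

lemma norm_alN:
  assumes "R > 0" "2 \<le> n" "DN a n \<noteq> 0"
  shows "norm (alN a R n) = 1 / (2 * (real n - 1) * R^(n-2) * norm (complex_of_real a - \<i>) *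
     (norm (DN a n) / norm (complex_of_real a - \<i>)^n))"
proof -
  let ?x = "norm (complex_of_real a - \<i>)"
  have x: "?x > 0" using Xnz by simp
  have e: "(of_nat (n-1) :: complex) = of_real (real n - 1)" using assms(2) by (simp add: of_nat_diff)
  have "sN R n = of_real (1 / (2 * (real n - 1) * R^(n-2)))" unfolding sN_def e by simp
  moreover have "1 / (2 * (real n - 1) * R^(n-2)) > 0" using assms by simp
  ultimately have s: "norm (sN R n) = 1 / (2 * (real n - 1) * R^(n-2))"
    by (metis norm_of_real abs_of_pos)
  have "norm (alN a R n) = norm (sN R n) * ?x^(n-1) / norm (DN a n)"
    by (simp add: alN_def norm_divide norm_mult norm_power)
  also have "?x^n = ?x * ?x^(n-1)" using assms(2) by (metis Suc_diff_1 order_less_le_trans pos2 power_Suc)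
  then have "norm (sN R n) * ?x^(n-1) / norm (DN a n) = 1 / (2 * (real n - 1) * R^(n-2) * ?x * (norm (DN a n) / ?x^n))"
    unfolding s using x assms by (simp add: field_simps)
  finally show ?thesis .
qed

lemma nonconv_bound:
  assumes R: "R > 0" and nr: "\<And>n. n > 0 \<Longrightarrow> DN a n \<noteq> 0"
    and conv: "fps2_converges_near0 (usol a R)"
  shows "\<exists>e>0. \<forall>n\<ge>2. e^n \<le> norm (DN a n) / norm (complex_of_real a - \<i>)^n"
proof -
  obtain r where r: "r > 0" and S: "\<And>p. p \<in> ball (0,0) r \<Longrightarrow>
     (\<lambda>(i,j). usol a R i j * of_real (fst p) ^ i * of_real (snd p) ^ j) summable_on UNIV"
    using conv unfolding fps2_converges_near0_def by blast
  define \<rho> where "\<rho> = r / 3"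
  have rho: "\<rho> > 0" using r by (simp add: \<rho>_def)
  have pin: "(\<rho>, \<rho>) \<in> ball (0,0) r"
  proof -
    have "norm (-\<rho>, -\<rho>) \<le> norm (-\<rho>) + norm (-\<rho>)" by (rule norm_Pair_le)
    then have "norm (-\<rho>, -\<rho>) < r" using r by (simp add: \<rho>_def)
    then show ?thesis by (simp add: mem_ball dist_norm)
  qed
  define g where "g = (\<lambda>(i,j). usol a R i j * of_real \<rho> ^ i * of_real \<rho> ^ j)"
  have "g summable_on UNIV" using S[OF pin] by (simp add: g_def)
  then have gs: "(\<lambda>x. norm (g x)) summable_on UNIV"
    using summable_on_iff_abs_summable_on_complex by blast
  define M where "M = infsum (\<lambda>x. norm (g x)) UNIV"
  have M0: "M \<ge> 0" unfolding M_def by (rule infsum_nonneg) auto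
  let ?x = "norm (complex_of_real a - \<i>)"
  have x: "?x > 0" using Xnz by simp
  have key: "M > 0 \<and> (R^2 / (M * ?x)) * (\<rho>/R)^n \<le> norm (DN a n) / ?x^n" if n: "2 \<le> n" for n
  proof -
    have inj: "inj_on (\<lambda>j. (n-j, j)) {..n}" by (auto intro: inj_onI)
    have "sum (\<lambda>x. norm (g x)) ((\<lambda>j. (n-j, j)) ` {..n}) \<le> M"
      unfolding M_def by (rule finite_sum_le_infsum[OF gs]) auto
    also have "sum (\<lambda>x. norm (g x)) ((\<lambda>j. (n-j, j)) ` {..n}) = (\<Sum>j\<le>n. norm (g (n-j, j)))"
      by (subst sum.reindex[OF inj]) simp
    also have "(\<Sum>j\<le>n. norm (g (n-j, j))) = \<rho>^n * (\<Sum>j\<le>n. norm (usol a R (n-j) j))"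
      unfolding sum_distrib_left
    proof (intro sum.cong refl)
      fix j assume "j \<in> {..n}"
      then have "\<rho>^(n-j) * \<rho>^j = \<rho>^n" by (simp add: power_add[symmetric])
      then show "norm (g (n-j, j)) = \<rho>^n * norm (usol a R (n-j) j)"
        using rho by (simp add: g_def norm_mult norm_power mult_ac)
    qed
    finally have b1: "\<rho>^n * (\<Sum>j\<le>n. norm (usol a R (n-j) j)) \<le> M" .
    have "norm (alN a R n) * 2^n = norm (\<Sum>j\<le>n. usol a R (n-j) j * (-\<i>)^j)"
      using usol_ev[OF n] by (simp add: norm_mult norm_power)
    also have "\<dots> \<le> (\<Sum>j\<le>n. norm (usol a R (n-j) j * (-\<i>)^j))" by (rule norm_sum)
    also have "\<dots> = (\<Sum>j\<le>n. norm (usol a R (n-j) j))" by (simp add: norm_mult norm_power)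
    finally have "norm (alN a R n) * 2^n * \<rho>^n \<le> \<rho>^n * (\<Sum>j\<le>n. norm (usol a R (n-j) j))"
      using rho by (simp add: mult_ac)
    with b1 have b: "norm (alN a R n) * 2^n * \<rho>^n \<le> M" by linarith
    have D: "DN a n \<noteq> 0" using nr n by simp
    have Q: "norm (DN a n) / ?x^n > 0" using D x by simp
    show ?thesis by (rule real_step[OF rho R x Q M0 n b norm_alN[OF R n D]])
  qed
  have Mp: "M > 0" using key[of 2] by simp
  define C where "C = R^2 / (M * ?x)"
  have C: "C > 0" using Mp x R by (simp add: C_def)
  define e where "e = min 1 C * (\<rho>/R)"
  have e: "e > 0" using C rho R by (simp add: e_def)
  have "e^n \<le> norm (DN a n) / ?x^n" if n: "2 \<le> n" for n
  proof -
    have m: "0 < min 1 C" "min 1 C \<le> 1" "min 1 C \<le> C" using C by auto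
    have "(min 1 C)^n \<le> min 1 C"
    proof -
      have "(min 1 C)^n = min 1 C * (min 1 C)^(n-1)" using n by (metis Suc_diff_1 order_less_le_trans pos2 power_Suc)
      also have "\<dots> \<le> min 1 C * 1" using m by (intro mult_left_mono power_le_one) auto
      finally show ?thesis by simp
    qed
    then have "e^n \<le> C * (\<rho>/R)^n" unfolding e_def power_mult_distrib
      using m rho R by (intro mult_right_mono) auto
    also have "\<dots> \<le> norm (DN a n) / ?x^n" using key[OF n] by (simp add: C_def)
    finally show ?thesis .
  qed
  then show ?thesis using e by blast
qed




definition cz :: "real \<times> real \<Rightarrow> complex" where
  "cz p = cnj (Complex (fst p) (snd p))"

definition phi :: "real \<Rightarrow> complex \<Rightarrow> nat \<Rightarrow> real \<times> real \<Rightarrow> complex" where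
  "phi R c k p = c / (of_real R - cz p)^(k+1)"

lemma cz_eq: "cz p = of_real (fst p) - \<i> * of_real (snd p)"
  by (simp add: cz_def complex_eq_iff)

lemma norm_cz: "norm (cz p) = norm p"
proof -
  obtain x y where p: "p = (x, y)" by (cases p)
  show ?thesis unfolding p cz_def by (simp add: norm_Pair complex_norm)
qed

lemma inball: "p \<in> ball (0,0) R \<longleftrightarrow> norm p < R"
  by (metis dist_0_norm zero_prod_def mem_ball)

lemma den_nz: "p \<in> ball (0,0) R \<Longrightarrow> of_real R - cz p \<noteq> 0"
proof
  assume h1: "p \<in> ball (0,0) R" and h2: "of_real R - cz p = 0"
  have a: "norm p < R" using h1 by (simp only: inball)
  have "cz p = of_real R" using h2 by simp
  then have "norm (cz p) = abs R" by simp
  then show False using a norm_cz[of p] by (smt (verit) norm_ge_zero)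
qed

lemma alg1:
  fixes B c K e :: complex
  assumes "B \<noteq> 0"
  shows "- (c * (K * B^k * e)) / (B^(k+1) * B^(k+1)) = - c * e * K / B^(k+2)"
proof -
  have p: "B^(k+1) * B^(k+1) = B^k * B^(k+2)" by (simp flip: power_add)
  have "B^k \<noteq> 0" "B^(k+2) \<noteq> 0" using assms by auto
  then show ?thesis unfolding p by (simp add: field_simps)
qed

lemma derivH:
  fixes c d e :: complex
  assumes "d + e * w \<noteq> 0"
  shows "((\<lambda>w. c / (d + e * w)^(k+1)) has_field_derivative (- c * e * of_nat (k+1) / (d + e * w)^(k+2))) (at w)"
proof -
  have "((\<lambda>w. c / (d + e * w)^(k+1)) has_field_derivative
      (- (c * (of_nat (k+1) * (d + e * w)^k * e)) / ((d + e * w)^(k+1) * (d + e * w)^(k+1)))) (at w)"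
    by (rule derivative_eq_intros refl | use assms in simp)+
  moreover have "- (c * (of_nat (k+1) * (d + e * w)^k * e)) / ((d + e * w)^(k+1) * (d + e * w)^(k+1))
     = - c * e * of_nat (k+1) / (d + e * w)^(k+2)"
    using assms by (rule alg1)
  ultimately show ?thesis by simp
qed

lemma pdx_phi:
  assumes g: "\<And>q. q \<in> ball (0,0) R \<Longrightarrow> g q = phi R c k q" and p: "p \<in> ball (0,0) R"
  shows "pdx g p = phi R (c * of_nat (k+1)) (k+1) p"
proof -
  obtain x0 y0 where pe: "p = (x0, y0)" by (cases p)
  define d where "d = complex_of_real R + \<i> * of_real y0"
  have dw: "d + (-1) * of_real t = of_real R - cz (t, y0)" for t by (simp add: d_def cz_eq)
  have nz: "d + (-1) * of_real x0 \<noteq> 0" unfolding dw using den_nz p pe by simp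
  have D: "((\<lambda>w. c / (d + (-1) * w)^(k+1)) has_field_derivative (- c * (-1) * of_nat (k+1) / (d + (-1) * of_real x0)^(k+2))) (at (of_real x0))"
    by (rule derivH[OF nz])
  have V: "((\<lambda>t. c / (d + (-1) * of_real t)^(k+1)) has_vector_derivative (- c * (-1) * of_nat (k+1) / (d + (-1) * of_real x0)^(k+2))) (at x0)"
    using has_vector_derivative_real_field[OF D] by simp
  define S where "S = (\<lambda>t::real. (t, y0)) -` ball (0,0) R"
  have So: "open S" unfolding S_def by (intro continuous_open_vimage open_ball continuous_intros)
  have xS: "x0 \<in> S" using p pe by (simp add: S_def)
  have V2: "((\<lambda>t. g (t, y0)) has_vector_derivative (- c * (-1) * of_nat (k+1) / (d + (-1) * of_real x0)^(k+2))) (at x0)"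
  proof (rule has_vector_derivative_transform_within_open[OF V So xS])
    fix t assume "t \<in> S"
    then have "(t, y0) \<in> ball (0,0) R" by (simp add: S_def)
    then show "c / (d + (-1) * of_real t)^(k+1) = g (t, y0)" using g unfolding phi_def dw by simp
  qed
  have "pdx g p = - c * (-1) * of_nat (k+1) / (d + (-1) * of_real x0)^(k+2)"
    unfolding pdx_def pe using vector_derivative_at[OF V2] by simp
  also have "\<dots> = phi R (c * of_nat (k+1)) (k+1) p"
    unfolding phi_def dw pe by (simp add: numeral_2_eq_2)
  finally show ?thesis .
qed

lemma pdy_phi:
  assumes g: "\<And>q. q \<in> ball (0,0) R \<Longrightarrow> g q = phi R c k q" and p: "p \<in> ball (0,0) R"
  shows "pdy g p = phi R (- c * \<i> * of_nat (k+1)) (k+1) p"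
proof -
  obtain x0 y0 where pe: "p = (x0, y0)" by (cases p)
  define d where "d = complex_of_real R - of_real x0"
  have dw: "d + \<i> * of_real t = of_real R - cz (x0, t)" for t by (simp add: d_def cz_eq)
  have nz: "d + \<i> * of_real y0 \<noteq> 0" unfolding dw using den_nz p pe by simp
  have D: "((\<lambda>w. c / (d + \<i> * w)^(k+1)) has_field_derivative (- c * \<i> * of_nat (k+1) / (d + \<i> * of_real y0)^(k+2))) (at (of_real y0))"
    by (rule derivH[OF nz])
  have V: "((\<lambda>t. c / (d + \<i> * of_real t)^(k+1)) has_vector_derivative (- c * \<i> * of_nat (k+1) / (d + \<i> * of_real y0)^(k+2))) (at y0)"
    using has_vector_derivative_real_field[OF D] by simp
  define S where "S = (\<lambda>t::real. (x0, t)) -` ball (0,0) R"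
  have So: "open S" unfolding S_def by (intro continuous_open_vimage open_ball continuous_intros)
  have yS: "y0 \<in> S" using p pe by (simp add: S_def)
  have V2: "((\<lambda>t. g (x0, t)) has_vector_derivative (- c * \<i> * of_nat (k+1) / (d + \<i> * of_real y0)^(k+2))) (at y0)"
  proof (rule has_vector_derivative_transform_within_open[OF V So yS])
    fix t assume "t \<in> S"
    then have "(x0, t) \<in> ball (0,0) R" by (simp add: S_def)
    then show "c / (d + \<i> * of_real t)^(k+1) = g (x0, t)" using g unfolding phi_def dw by simp
  qed
  have "pdy g p = - c * \<i> * of_nat (k+1) / (d + \<i> * of_real y0)^(k+2)"
    unfolding pdy_def pe using vector_derivative_at[OF V2] by simp
  also have "\<dots> = phi R (- c * \<i> * of_nat (k+1)) (k+1) p"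
    unfolding phi_def dw pe by (simp add: numeral_2_eq_2)
  finally show ?thesis .
qed




definition fR :: "real \<Rightarrow> real \<times> real \<Rightarrow> complex" where
  "fR R = (\<lambda>p. \<Sum>m. (cnj (Complex (fst p) (snd p)) / of_real R) ^ m)"

lemma fR_ball:
  assumes p: "p \<in> ball (0,0) R"
  shows "fR R p = phi R (of_real R) 0 p"
proof -
  have n: "norm p < R" using p by (simp only: inball)
  then have R: "R > 0" by (smt (verit) norm_ge_zero)
  have "norm (cz p / of_real R) < 1" using n R by (simp add: norm_divide norm_cz)
  then have "fR R p = 1 / (1 - cz p / of_real R)"
    unfolding fR_def cz_def[symmetric] by (simp add: suminf_geometric)
  also have "\<dots> = of_real R / (of_real R - cz p)"
    using R by (simp add: field_simps)
  finally show ?thesis by (simp add: phi_def)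
qed

lemma diff_fst: "(\<lambda>x::real\<times>real. complex_of_real (fst x)) differentiable F"
  by (rule bounded_linear_imp_differentiable) (intro bounded_linear_compose[OF bounded_linear_of_real] bounded_linear_fst)
lemma diff_snd: "(\<lambda>x::real\<times>real. complex_of_real (snd x)) differentiable F"
  by (rule bounded_linear_imp_differentiable) (intro bounded_linear_compose[OF bounded_linear_of_real] bounded_linear_snd)

lemma phi_diff:
  assumes p: "p \<in> ball (0,0) R"
  shows "phi R c k differentiable (at p)"
proof -
  have nz: "of_real R - cz p \<noteq> 0" by (rule den_nz[OF p])
  have e: "phi R c k = (\<lambda>q. c / (of_real R - (of_real (fst q) - \<i> * of_real (snd q)))^(k+1))"
    by (simp add: phi_def cz_eq fun_eq_iff)
  show ?thesis unfolding e
    using nz by (intro derivative_intros diff_fst diff_snd) (auto simp: cz_eq)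
qed

lemma partials_phi:
  assumes "g \<in> partials (fR R)"
  shows "\<exists>c k. \<forall>q\<in>ball (0,0) R. g q = phi R c k q"
  using assms
proof (induction rule: partials.induct)
  case base
  then show ?case using fR_ball by blast
next
  case (dx g)
  then obtain c k where "\<forall>q\<in>ball (0,0) R. g q = phi R c k q" by blast
  then have "\<forall>q\<in>ball (0,0) R. pdx g q = phi R (c * of_nat (k+1)) (k+1) q"
    using pdx_phi by blast
  then show ?case by blast
next
  case (dy g)
  then obtain c k where "\<forall>q\<in>ball (0,0) R. g q = phi R c k q" by blast
  then have "\<forall>q\<in>ball (0,0) R. pdy g q = phi R (- c * \<i> * of_nat (k+1)) (k+1) q"
    using pdy_phi by blast
  then show ?case by blast
qed

lemma smooth_fR: "smooth_on (ball (0,0) R) (fR R)"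
  unfolding smooth_on_def
proof
  fix g assume "g \<in> partials (fR R)"
  then obtain c k where g: "\<forall>q\<in>ball (0,0) R. g q = phi R c k q" using partials_phi by blast
  show "g differentiable_on ball (0,0) R"
  proof (rule differentiable_at_imp_differentiable_on)
    fix p :: "real \<times> real" assume p: "p \<in> ball (0,0) R"
    obtain D where D: "(phi R c k has_derivative D) (at p)"
      using phi_diff[OF p] unfolding differentiable_def by blast
    have "(g has_derivative D) (at p)"
      by (rule has_derivative_transform_within_open[OF D open_ball p]) (use g in simp)
    then show "g differentiable at p" unfolding differentiable_def by blast
  qed
qed

lemma pdy_iter:
  "\<forall>q\<in>ball (0,0) R. (pdy ^^ j) (fR R) q = phi R (of_real R * fact j * (-\<i>)^j) j q"
proof (induction j)
  case 0
  then show ?case using fR_ball by simp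
next
  case (Suc j)
  have A: "\<forall>q\<in>ball (0,0) R. pdy ((pdy ^^ j) (fR R)) q = phi R (- (of_real R * fact j * (-\<i>)^j) * \<i> * of_nat (j+1)) (j+1) q"
    using pdy_phi Suc by blast
  have e: "- (of_real R * fact j * (-\<i>)^j) * \<i> * of_nat (j+1) = (of_real R * fact (Suc j) * (-\<i>)^(Suc j) :: complex)"
    by (simp add: algebra_simps)
  show ?case using A unfolding e by simp
qed

lemma pdx_iter:
  assumes "\<forall>q\<in>ball (0,0) R. g q = phi R c k q"
  shows "\<forall>q\<in>ball (0,0) R. (pdx ^^ i) g q = phi R (c * fact (k+i) / fact k) (k+i) q"
proof (induction i)
  case 0
  then show ?case using assms by simp
next
  case (Suc i)
  have A: "\<forall>q\<in>ball (0,0) R. pdx ((pdx ^^ i) g) q = phi R (c * fact (k+i) / fact k * of_nat (k+i+1)) (k+i+1) q"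
    using pdx_phi Suc by blast
  have e: "c * fact (k+i) / fact k * of_nat (k+i+1) = (c * fact (k + Suc i) / fact k :: complex)"
    by (simp add: algebra_simps)
  show ?case using A unfolding e by simp
qed

lemma phi0: "phi R c k (0,0) = c / of_real R ^ (k+1)"
proof -
  have "cz (0,0) = 0" by (simp add: cz_def complex_eq_iff)
  then show ?thesis by (simp add: phi_def)
qed

lemma taylor_fR:
  assumes R: "R > 0"
  shows "taylor_coeff (fR R) i j = Tc R i j"
proof -
  have z: "(0::real,0::real) \<in> ball (0,0) R" using R by simp
  have "((pdx ^^ i) ((pdy ^^ j) (fR R))) (0,0) = phi R (of_real R * fact j * (-\<i>)^j * fact (j+i) / fact j) (j+i) (0,0)"
    using pdx_iter[OF pdy_iter] z by blast
  also have "\<dots> = of_real R * fact (i+j) * (-\<i>)^j / of_real R ^ (i+j+1)"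
    unfolding phi0 by (simp add: ac_simps)
  finally have e: "((pdx ^^ i) ((pdy ^^ j) (fR R))) (0,0) = of_real R * fact (i+j) * (-\<i>)^j / of_real R ^ (i+j+1)" .
  have b: "(of_nat ((i+j) choose j) :: complex) = fact (i+j) / (fact j * fact i)"
    using binomial_fact[of j "i+j"] by simp
  show ?thesis unfolding taylor_coeff_def e Tc_def b using R by (simp add: field_simps)
qed

lemma taylor_hom_fR:
  assumes R: "R > 0"
  shows "taylor_hom (fR R) m p = (cnj (Complex (fst p) (snd p)) / of_real R) ^ m"
proof -
  have "taylor_hom (fR R) m p = (\<Sum>i\<le>m. of_nat (m choose i) * of_real (fst p) ^ i * (- \<i> * of_real (snd p)) ^ (m - i)) / of_real R ^ m"
    unfolding taylor_hom_def taylor_fR[OF R] Tc_def sum_divide_distrib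
  proof (intro sum.cong refl)
    fix i assume "i \<in> {..m}"
    then have e1: "i + (m - i) = m" and e2: "(m choose (m - i)) = (m choose i)" by (auto simp: binomial_symmetric[symmetric])
    then show "of_nat ((i + (m - i)) choose (m - i)) * (- \<i>) ^ (m - i) / complex_of_real R ^ (i + (m - i)) * of_real (fst p) ^ i * of_real (snd p) ^ (m - i)
      = of_nat (m choose i) * of_real (fst p) ^ i * (- \<i> * of_real (snd p)) ^ (m - i) / of_real R ^ m"
      unfolding e1 e2 power_mult_distrib by (simp add: ac_simps)
  qed
  also have "\<dots> = (of_real (fst p) + (- \<i> * of_real (snd p))) ^ m / of_real R ^ m"
    by (simp only: binomial_ring)
  also have "of_real (fst p) + (- \<i> * of_real (snd p)) = cnj (Complex (fst p) (snd p))"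
    by (simp add: complex_eq_iff)
  also have "cnj (Complex (fst p) (snd p)) ^ m / of_real R ^ m = (cnj (Complex (fst p) (snd p)) / of_real R) ^ m"
    by (simp add: power_divide)
  finally show ?thesis .
qed



lemma fR_algA:
  assumes R: "R > 0"
  shows "fR R \<in> algA R"
  unfolding algA_def
proof (intro CollectI conjI allI impI smooth_fR)
  fix K :: "(real \<times> real) set" assume K: "compact K \<and> K \<subseteq> ball (0,0) R"
  obtain r where r: "0 \<le> r" "r < R" "\<And>p. p \<in> K \<Longrightarrow> norm p \<le> r"
  proof (cases "K = {}")
    case True
    then show ?thesis using that[of 0] R by auto
  next
    case False
    have "continuous_on K norm" by (intro continuous_intros)
    then obtain x where x: "x \<in> K" "\<And>y. y \<in> K \<Longrightarrow> norm y \<le> norm x"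
      using continuous_attains_sup[of K norm] K False by blast
    have "norm x < R" using x(1) K by (auto simp only: inball subset_iff)
    then show ?thesis using that[of "norm x"] x by auto
  qed
  have bnd: "norm (taylor_hom (fR R) m p) \<le> (r/R)^m" if "p \<in> K" for m p
  proof -
    have "norm (taylor_hom (fR R) m p) = (norm p / R)^m"
      unfolding taylor_hom_fR[OF R] cz_def[symmetric] using R
      by (simp add: norm_power norm_divide norm_cz)
    also have "\<dots> \<le> (r/R)^m" using r(3)[OF that] R by (intro power_mono divide_right_mono) auto
    finally show ?thesis .
  qed
  have sm: "summable (\<lambda>m. (r/R)^m)" using r R by (intro summable_geometric) simp
  show "uniformly_convergent_on K (\<lambda>n p. \<Sum>m<n. norm (taylor_hom (fR R) m p))"
    by (rule Weierstrass_m_test'[OF _ sm]) (use bnd in simp)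
  have "uniform_limit K (\<lambda>n p. \<Sum>m<n. taylor_hom (fR R) m p) (\<lambda>p. \<Sum>m. taylor_hom (fR R) m p) sequentially"
    by (rule Weierstrass_m_test[OF _ sm]) (use bnd in simp)
  moreover have "(\<lambda>p. \<Sum>m. taylor_hom (fR R) m p) = fR R"
  proof
    fix p
    have "(\<Sum>m. taylor_hom (fR R) m p) = (\<Sum>m. (cnj (Complex (fst p) (snd p)) / of_real R) ^ m)"
      by (simp only: taylor_hom_fR[OF R])
    also have "\<dots> = fR R p" by (simp add: fR_def)
    finally show "(\<Sum>m. taylor_hom (fR R) m p) = fR R p" .
  qed
  ultimately show "uniform_limit K (\<lambda>n p. \<Sum>m<n. taylor_hom (fR R) m p) (fR R) sequentially" by simp
qed

theorem mainTheorem10: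
  fixes a R :: real and A :: complex
  assumes "a \<ge> 0"
    and "A = (of_real a + \<i>) / (of_real a - \<i>)"
    and "\<forall>n::nat. n > 0 \<longrightarrow> A ^ n \<noteq> 1"
    and "liminf (\<lambda>m::nat. ereal (norm (A ^ m - 1) powr (1 / real m))) = 0"
    and "0 < R"
  defines "f \<equiv> (\<lambda>p::real \<times> real. \<Sum>m. (cnj (Complex (fst p) (snd p)) / of_real R) ^ m)"
  shows "f \<in> algA R \<and> (\<exists>u. goursat_sol a f u) \<and>
         (\<forall>u. goursat_sol a f u \<longrightarrow> \<not> fps2_converges_near0 u)"
proof -
  have fe: "f = fR R" unfolding f_def fR_def ..
  have R: "R > 0" by fact
  have X: "complex_of_real a - \<i> \<noteq> 0" by (rule Xnz)
  have An: "A^n - 1 = DN a n / (complex_of_real a - \<i>)^n" for n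
    using X unfolding assms(2) DN_def by (simp add: power_divide field_simps)
  have nr: "DN a n \<noteq> 0" if "n > 0" for n
  proof
    assume "DN a n = 0"
    then have "A^n = 1" using An[of n] by simp
    then show False using assms(3) that by blast
  qed
  have tc: "taylor_coeff f i j = Tc R i j" for i j unfolding fe by (rule taylor_fR[OF R])
  have sol: "goursat_sol a f (usol a R)"
    unfolding goursat_sol_def
  proof
    show "\<forall>i j. fps_lap (usol a R) i j = taylor_coeff f i j" using usol_lap[OF R] tc by simp
    show "\<exists>q. \<forall>i j. usol a R i j = mult_goursat a q i j"
    proof (rule mg_exists)
      show "usol a R n 0 = 0" for n by (rule usol_0)
      show "(\<Sum>l\<le>n. complex_of_real a ^ (n-l) * usol a R (n-l) l) = 0" for n
      proof (rule usol_sum)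
        show "DN a n \<noteq> 0 \<or> n < 2" using nr[of n] by (cases "n = 0") auto
      qed
    qed
  qed
  have nc: "\<not> fps2_converges_near0 u" if gs: "goursat_sol a f u" for u
  proof
    assume conv: "fps2_converges_near0 u"
    obtain q where q: "\<And>i j. u i j = mult_goursat a q i j" and l: "\<And>i j. fps_lap u i j = taylor_coeff f i j"
      using gs unfolding goursat_sol_def by blast
    have "u = usol a R"
      using usol_unique[OF nr R, of u q] l q tc by (auto simp: fun_eq_iff)
    then have "fps2_converges_near0 (usol a R)" using conv by simp
    then obtain e where e: "e > 0" and eb: "\<And>n. n \<ge> 2 \<Longrightarrow> e^n \<le> norm (DN a n) / norm (complex_of_real a - \<i>)^n"
      using nonconv_bound[OF R nr] by blast
    have ge: "e \<le> norm (A ^ n - 1) powr (1 / real n)" if n: "n \<ge> 2" for n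
    proof -
      have "e^n \<le> norm (A ^ n - 1)" using eb[OF n] An[of n] by (simp add: norm_divide norm_power)
      then have "(e^n) powr (1 / real n) \<le> norm (A ^ n - 1) powr (1 / real n)"
        using e by (intro powr_mono2) auto
      moreover have "(e^n) powr (1 / real n) = e"
        using e n by (simp add: powr_realpow[symmetric] powr_powr)
      ultimately show ?thesis by simp
    qed
    have "ereal e \<le> liminf (\<lambda>m::nat. ereal (norm (A ^ m - 1) powr (1 / real m)))"
    proof (subst le_Liminf_iff, intro allI impI)
      fix y assume y: "y < ereal e"
      show "\<forall>\<^sub>F m in sequentially. y < ereal (norm (A ^ m - 1) powr (1 / real m))"
        unfolding eventually_sequentially
      proof (intro exI allI impI)
        fix m :: nat assume "2 \<le> m"
        then have "ereal e \<le> ereal (norm (A ^ m - 1) powr (1 / real m))" using ge by simp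
        then show "y < ereal (norm (A ^ m - 1) powr (1 / real m))" using y by (rule order.strict_trans2[rotated])
      qed
    qed
    then show False using assms(4) e by simp
  qed
  show ?thesis using fR_algA[OF R] sol nc fe by blast
qed


end
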